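(* Let $K=1$. For every reflection matrix $\mathbf\Phi$ for which (SDR1.2) has an optimal solution, problems (P1.1) and (P2.1) have the same optimal value. Consequently, when these subproblems attain their optima for all $\mathbf\Phi$, the joint problems (P1) and (P2) have the same optimal value, i.e. sensing-interference cancellation at the (single) user provides no gain.
   Context: Let $M,N\ge1$ be integers and $K=1$. Fixed data: $\mathbf G\in\mathbb C^{N\times M}$, $\mathbf h_{\mathrm d,1}\in\mathbb C^{M}$, $\mathbf h_{\mathrm r,1}\in\mathbb C^{N}$, threshold $\Gamma_1>0$, noise power $\sigma_1^2>0$, power budget $P_0>0$. A reflection matrix is $\mathbf\Phi=\mathrm{diag}(\mathbf v)$ with $\mathbf v\in\mathbb C^N$, $|v_n|=1$ for all $n$; put $\mathbf h_1=\mathbf h_{\mathrm d,1}+\mathbf G^H\mathbf\Phi^H\mathbf h_{\mathrm r,1}$ and $\mathbf H_1=\mathbf h_1\mathbf h_1^H$. For $\mathbf w_1\in\mathbb C^M$ and Hermitian $\mathbf R_0\succeq\mathbf 0$: Type-I SINR $\gamma_1^{\mathrm I}=|\mathbf h_1^H\mathbf w_1|^2/(\mathbf h_1^H\mathbf R_0\mathbf h_1+\sigma_1^2)$, Type-II SINR $\gamma_1^{\mathrm{II}}=|\mathbf h_1^H\mathbf w_1|^2/\sigma_1^2$. For Hermitian $\mathbf X\succeq\mathbf 0$ define $f(\mathbf X)=\mathrm{tr}\big((\mathbf G\mathbf X\mathbf G^H)^{-1}\big)$ if $\mathbf G\mathbf X\mathbf G^H$ is invertible and $+\infty$ otherwise.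 Problem (P1.1) (resp. (P2.1)), for fixed $\mathbf\Phi$: minimize $f(\mathbf w_1\mathbf w_1^H+\mathbf R_0)$ over $\mathbf w_1,\mathbf R_0\succeq\mathbf 0$ subject to $\gamma_1^{\mathrm I}\ge\Gamma_1$ (resp. $\gamma_1^{\mathrm{II}}\ge\Gamma_1$) and $\|\mathbf w_1\|^2+\mathrm{tr}(\mathbf R_0)\le P_0$. Problems (P1) and (P2) are the same minimizations carried out jointly over $\mathbf w_1,\mathbf R_0$ and all reflection matrices $\mathbf\Phi$. Problem (SDR1.2): minimize $f(\mathbf W_1+\mathbf R_0)$ over Hermitian $\mathbf W_1\succeq\mathbf 0,\mathbf R_0\succeq\mathbf 0$ subject to $(1+\tfrac1{\Gamma_1})\mathrm{tr}(\mathbf H_1\mathbf W_1)-\mathrm{tr}(\mathbf H_1(\mathbf W_1+\mathbf R_0))\ge\sigma_1^2$ and $\mathrm{tr}(\mathbf W_1)+\mathrm{tr}(\mathbf R_0)\le P_0$. *)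

theory Defs
  imports "Jordan_Normal_Form.Schur_Decomposition" "Jordan_Normal_Form.Gauss_Jordan_Elimination"
    "HOL-Library.Extended_Real"
begin

definition trace_mat :: "complex mat \<Rightarrow> complex" where
  "trace_mat A = (\<Sum>i<dim_row A. A $$ (i,i))"

definition hermitian_mat :: "nat \<Rightarrow> complex mat \<Rightarrow> bool" where
  "hermitian_mat n A \<longleftrightarrow> A \<in> carrier_mat n n \<and> mat_adjoint A = A"

text \<open>Hermitian positive semidefinite: x^H A x >= 0 for all x (the form is real for Hermitian A).\<close>
definition psd_mat :: "nat \<Rightarrow> complex mat \<Rightarrow> bool" where
  "psd_mat n A \<longleftrightarrow> hermitian_mat n A \<and> (\<forall>x\<in>carrier_vec n. 0 \<le> Re ((A *\<^sub>v x) \<bullet>c x))"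

definition outer :: "complex vec \<Rightarrow> complex mat" where
  "outer w = mat (dim_vec w) (dim_vec w) (\<lambda>(i,j). w $ i * cnj (w $ j))"

definition sqnorm :: "complex vec \<Rightarrow> real" where
  "sqnorm w = (\<Sum>i<dim_vec w. (cmod (w $ i))\<^sup>2)"

definition crb :: "complex mat \<Rightarrow> complex mat \<Rightarrow> ereal" where
  "crb G X = (case mat_inverse (G * X * mat_adjoint G) of
                Some B \<Rightarrow> ereal (Re (trace_mat B))
              | None \<Rightarrow> \<infinity>)"

definition unimod :: "nat \<Rightarrow> complex vec \<Rightarrow> bool" where
  "unimod N v \<longleftrightarrow> v \<in> carrier_vec N \<and> (\<forall>n<N. cmod (v $ n) = 1)"

definition refl_mat :: "nat \<Rightarrow> complex vec \<Rightarrow> complex mat" where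
  "refl_mat N v = mat N N (\<lambda>(i,j). if i = j then v $ i else 0)"

definition chan :: "complex mat \<Rightarrow> complex vec \<Rightarrow> complex vec \<Rightarrow> complex mat \<Rightarrow> complex vec" where
  "chan G hdir hr Phi = hdir + mat_adjoint G *\<^sub>v (mat_adjoint Phi *\<^sub>v hr)"

text \<open>h^H w = w .c h ; h^H R h = (R h) .c h.\<close>
definition sinr1 :: "complex vec \<Rightarrow> complex vec \<Rightarrow> complex mat \<Rightarrow> real \<Rightarrow> real" where
  "sinr1 h w R sigma2 = (cmod (w \<bullet>c h))\<^sup>2 / (Re ((R *\<^sub>v h) \<bullet>c h) + sigma2)"

definition sinr2 :: "complex vec \<Rightarrow> complex vec \<Rightarrow> real \<Rightarrow> real" where
  "sinr2 h w sigma2 = (cmod (w \<bullet>c h))\<^sup>2 / sigma2"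

definition feas1 :: "nat \<Rightarrow> complex mat \<Rightarrow> complex vec \<Rightarrow> complex vec \<Rightarrow> real \<Rightarrow> real \<Rightarrow> real
    \<Rightarrow> complex mat \<Rightarrow> (complex vec \<times> complex mat) set" where
  "feas1 M G hdir hr Gam sigma2 P0 Phi =
     {(w, R). w \<in> carrier_vec M \<and> psd_mat M R
        \<and> sinr1 (chan G hdir hr Phi) w R sigma2 \<ge> Gam
        \<and> sqnorm w + Re (trace_mat R) \<le> P0}"

definition feas2 :: "nat \<Rightarrow> complex mat \<Rightarrow> complex vec \<Rightarrow> complex vec \<Rightarrow> real \<Rightarrow> real \<Rightarrow> real
    \<Rightarrow> complex mat \<Rightarrow> (complex vec \<times> complex mat) set" where
  "feas2 M G hdir hr Gam sigma2 P0 Phi =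
     {(w, R). w \<in> carrier_vec M \<and> psd_mat M R
        \<and> sinr2 (chan G hdir hr Phi) w sigma2 \<ge> Gam
        \<and> sqnorm w + Re (trace_mat R) \<le> P0}"

text \<open>Optimal values (infimum; +infinity if infeasible).\<close>
definition val_P11 where
  "val_P11 M G hdir hr Gam sigma2 P0 Phi =
     (INF p \<in> feas1 M G hdir hr Gam sigma2 P0 Phi. crb G (outer (fst p) + snd p))"

definition val_P21 where
  "val_P21 M G hdir hr Gam sigma2 P0 Phi =
     (INF p \<in> feas2 M G hdir hr Gam sigma2 P0 Phi. crb G (outer (fst p) + snd p))"

definition val_P1 where
  "val_P1 M N G hdir hr Gam sigma2 P0 =
     (INF p \<in> {(v, w, R). unimod N v \<and> (w, R) \<in> feas1 M G hdir hr Gam sigma2 P0 (refl_mat N v)}.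
        crb G (outer (fst (snd p)) + snd (snd p)))"

definition val_P2 where
  "val_P2 M N G hdir hr Gam sigma2 P0 =
     (INF p \<in> {(v, w, R). unimod N v \<and> (w, R) \<in> feas2 M G hdir hr Gam sigma2 P0 (refl_mat N v)}.
        crb G (outer (fst (snd p)) + snd (snd p)))"

definition feas_sdr :: "nat \<Rightarrow> complex mat \<Rightarrow> complex vec \<Rightarrow> complex vec \<Rightarrow> real \<Rightarrow> real \<Rightarrow> real
    \<Rightarrow> complex mat \<Rightarrow> (complex mat \<times> complex mat) set" where
  "feas_sdr M G hdir hr Gam sigma2 P0 Phi =
     (let H = outer (chan G hdir hr Phi) in
      {(W, R). psd_mat M W \<and> psd_mat M R
        \<and> (1 + 1 / Gam) * Re (trace_mat (H * W)) - Re (trace_mat (H * (W + R))) \<ge> sigma2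
        \<and> Re (trace_mat W) + Re (trace_mat R) \<le> P0})"

definition sdr_has_opt where
  "sdr_has_opt M G hdir hr Gam sigma2 P0 Phi \<longleftrightarrow>
     (\<exists>p \<in> feas_sdr M G hdir hr Gam sigma2 P0 Phi.
        \<forall>q \<in> feas_sdr M G hdir hr Gam sigma2 P0 Phi.
          crb G (fst p + snd p) \<le> crb G (fst q + snd q))"

end

theory Submission imports Defs begin

lemma adj_carrier: "A \<in> carrier_mat n m \<Longrightarrow> mat_adjoint A \<in> carrier_mat m n"
  unfolding mat_adjoint_def by auto

lemma adj_eval: "A \<in> carrier_mat n m \<Longrightarrow> i < m \<Longrightarrow> j < n \<Longrightarrow> mat_adjoint A $$ (i,j) = cnj (A $$ (j,i))"
  unfolding mat_adjoint_def by (auto simp: mat_of_rows_def)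

lemma herm_iff: "hermitian_mat n A \<longleftrightarrow> A \<in> carrier_mat n n \<and> (\<forall>i<n. \<forall>j<n. A $$ (i,j) = cnj (A $$ (j,i)))"
proof
  assume h: "hermitian_mat n A"
  hence c: "A \<in> carrier_mat n n" and e: "mat_adjoint A = A" unfolding hermitian_mat_def by auto
  show "A \<in> carrier_mat n n \<and> (\<forall>i<n. \<forall>j<n. A $$ (i,j) = cnj (A $$ (j,i)))"
    using c adj_eval[OF c] e by metis
next
  assume h: "A \<in> carrier_mat n n \<and> (\<forall>i<n. \<forall>j<n. A $$ (i,j) = cnj (A $$ (j,i)))"
  hence c: "A \<in> carrier_mat n n" by auto
  have ac: "mat_adjoint A \<in> carrier_mat n n" by (rule adj_carrier[OF c])
  have "mat_adjoint A = A"
  proof (rule eq_matI)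
    fix i j assume "i < dim_row A" "j < dim_col A"
    hence ij: "i < n" "j < n" using c by auto
    have e1: "mat_adjoint A $$ (i,j) = cnj (A $$ (j,i))" by (rule adj_eval[OF c ij])
    have "A $$ (j,i) = cnj (A $$ (i,j))" using h ij by blast
    hence "cnj (A $$ (j,i)) = A $$ (i,j)" by simp
    with e1 show "mat_adjoint A $$ (i,j) = A $$ (i,j)" by simp
  qed (use ac c in auto)
  thus "hermitian_mat n A" using c unfolding hermitian_mat_def by auto
qed

definition bf :: "complex mat \<Rightarrow> complex vec \<Rightarrow> complex vec \<Rightarrow> complex" where
  "bf X x y = (X *\<^sub>v x) \<bullet>c y"

lemma bf_sum: assumes "X \<in> carrier_mat n n" "x \<in> carrier_vec n" "y \<in> carrier_vec n"
  shows "bf X x y = (\<Sum>i<n. \<Sum>j<n. X $$ (i,j) * x $ j * cnj (y $ i))"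
  using assms unfolding bf_def scalar_prod_def
  by (auto simp: mult_mat_vec_def row_def sum_distrib_right lessThan_atLeast0 scalar_prod_def intro!: sum.cong)

lemma trace_outer: "trace_mat (outer w) = (\<Sum>i<dim_vec w. w $ i * cnj (w $ i))"
  unfolding trace_mat_def outer_def by auto

lemma sqnorm_outer: "sqnorm w = Re (trace_mat (outer w))"
  unfolding trace_outer sqnorm_def by (auto simp: complex_mult_cnj cmod_def intro!: sum.cong)

lemma outer_carrier: "w \<in> carrier_vec n \<Longrightarrow> outer w \<in> carrier_mat n n"
  unfolding outer_def by auto

lemma bf_outer: assumes "w \<in> carrier_vec n" "x \<in> carrier_vec n" "y \<in> carrier_vec n"
  shows "bf (outer w) x y = (x \<bullet>c w) * (w \<bullet>c y)"
proof -
  have "bf (outer w) x y = (\<Sum>i<n. \<Sum>j<n. w $ i * cnj (w $ j) * x $ j * cnj (y $ i))"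
    using bf_sum[OF outer_carrier[OF assms(1)] assms(2,3)] assms(1) unfolding outer_def by auto
  also have "\<dots> = (\<Sum>i<n. \<Sum>j<n. (w $ i * cnj (y $ i)) * (x $ j * cnj (w $ j)))"
    by (intro sum.cong refl) (simp add: ac_simps)
  also have "\<dots> = (\<Sum>i<n. w $ i * cnj (y $ i)) * (\<Sum>j<n. x $ j * cnj (w $ j))"
    by (simp add: sum_product)
  also have "\<dots> = (\<Sum>j<n. x $ j * cnj (w $ j)) * (\<Sum>i<n. w $ i * cnj (y $ i))"
    by (simp add: mult.commute)
  also have "\<dots> = (x \<bullet>c w) * (w \<bullet>c y)"
    using assms unfolding scalar_prod_def by (simp add: lessThan_atLeast0)
  finally show ?thesis .
qed

lemma cs_swap: assumes "x \<in> carrier_vec n" "y \<in> carrier_vec n" shows "x \<bullet>c y = cnj (y \<bullet>c x)"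
proof -
  have "conjugate (conjugate y \<bullet> x) = y \<bullet>c x" by (rule conjugate_conjugate_sprod[OF assms(2,1)])
  hence "cnj (y \<bullet>c x) = conjugate y \<bullet> x" by (metis complex_cnj_cnj conjugate_complex_def)
  thus ?thesis using conjugate_vec_sprod_comm[OF assms] by (simp only:)
qed


lemma bf_minus_left: assumes X: "X \<in> carrier_mat n n" and v: "a \<in> carrier_vec n" "b \<in> carrier_vec n" "y \<in> carrier_vec n"
  shows "bf X (a - b) y = bf X a y - bf X b y"
  unfolding bf_def
  by (subst mult_minus_distrib_mat_vec[OF X v(1,2)], rule minus_scalar_prod_distrib[of _ n], insert X v, auto)

lemma bf_smult_left: assumes X: "X \<in> carrier_mat n n" and v: "a \<in> carrier_vec n" "y \<in> carrier_vec n"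
  shows "bf X (c \<cdot>\<^sub>v a) y = c * bf X a y"
  unfolding bf_def
  by (subst mult_mat_vec[OF X v(1)], rule smult_scalar_prod_distrib[of _ n], insert X v, auto)

lemma bf_herm: assumes H: "hermitian_mat n X" and v: "x \<in> carrier_vec n" "y \<in> carrier_vec n"
  shows "bf X x y = cnj (bf X y x)"
proof -
  have X: "X \<in> carrier_mat n n" and hh: "\<forall>i<n. \<forall>j<n. X $$ (i,j) = cnj (X $$ (j,i))"
    using H unfolding herm_iff by blast+
  have c: "cnj (X $$ (i,j)) = X $$ (j,i)" if "i < n" "j < n" for i j
  proof -
    have "X $$ (j,i) = cnj (X $$ (i,j))" using hh that by blast
    thus ?thesis by simp
  qed
  have "cnj (bf X y x) = (\<Sum>i<n. \<Sum>j<n. cnj (X $$ (i,j)) * cnj (y $ j) * x $ i)"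
    unfolding bf_sum[OF X v(2,1)] cnj_sum by (simp add: mult.assoc)
  also have "\<dots> = (\<Sum>i<n. \<Sum>j<n. X $$ (j,i) * x $ i * cnj (y $ j))"
    by (intro sum.cong refl) (simp add: c mult.commute mult.left_commute)
  also have "\<dots> = (\<Sum>j<n. \<Sum>i<n. X $$ (j,i) * x $ i * cnj (y $ j))"
    by (rule sum.swap)
  also have "\<dots> = bf X x y" by (rule bf_sum[OF X v, symmetric])
  finally show ?thesis by simp
qed

lemma bf_real: assumes H: "hermitian_mat n X" and v: "x \<in> carrier_vec n"
  shows "bf X x x = of_real (Re (bf X x x))"
proof -
  have "bf X x x = cnj (bf X x x)" by (rule bf_herm[OF H v v])
  hence "Im (bf X x x) = 0" by (metis cnj.simps(2) equal_neg_zero)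
  thus ?thesis by (simp add: complex_eq_iff)
qed

lemma bf_minus_right: assumes H: "hermitian_mat n X" and v: "a \<in> carrier_vec n" "b \<in> carrier_vec n" "y \<in> carrier_vec n"
  shows "bf X y (a - b) = bf X y a - bf X y b"
proof -
  have X: "X \<in> carrier_mat n n" using H unfolding hermitian_mat_def by auto
  have "bf X y (a - b) = cnj (bf X (a - b) y)" by (rule bf_herm[OF H v(3)], insert v, auto)
  also have "\<dots> = cnj (bf X a y) - cnj (bf X b y)" by (simp add: bf_minus_left[OF X v])
  also have "\<dots> = bf X y a - bf X y b" using bf_herm[OF H v(3) v(1)] bf_herm[OF H v(3) v(2)] by simp
  finally show ?thesis .
qed

lemma bf_smult_right: assumes H: "hermitian_mat n X" and v: "a \<in> carrier_vec n" "y \<in> carrier_vec n"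
  shows "bf X y (c \<cdot>\<^sub>v a) = cnj c * bf X y a"
proof -
  have X: "X \<in> carrier_mat n n" using H unfolding hermitian_mat_def by auto
  have "bf X y (c \<cdot>\<^sub>v a) = cnj (bf X (c \<cdot>\<^sub>v a) y)" by (rule bf_herm[OF H v(2)], insert v, auto)
  also have "\<dots> = cnj c * cnj (bf X a y)" by (simp add: bf_smult_left[OF X v])
  also have "\<dots> = cnj c * bf X y a" using bf_herm[OF H v(2) v(1)] by simp
  finally show ?thesis .
qed

lemma cs: assumes H: "hermitian_mat n X" and psd: "\<And>z. z \<in> carrier_vec n \<Longrightarrow> 0 \<le> Re (bf X z z)"
  and u: "u \<in> carrier_vec n" and v: "v \<in> carrier_vec n" and qv: "Re (bf X v v) > 0"
  shows "(cmod (bf X v u))\<^sup>2 \<le> Re (bf X u u) * Re (bf X v v)"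
proof -
  have X: "X \<in> carrier_mat n n" using H unfolding hermitian_mat_def by auto
  define q where "q = Re (bf X v v)"
  define \<beta> where "\<beta> = bf X v u"
  define t where "t = cnj \<beta> / complex_of_real q"
  define z where "z = u - t \<cdot>\<^sub>v v"
  have tv: "t \<cdot>\<^sub>v v \<in> carrier_vec n" using v by auto
  have z: "z \<in> carrier_vec n" unfolding z_def using u v by auto
  have vv: "bf X v v = of_real q" unfolding q_def by (rule bf_real[OF H v])
  have uv: "bf X u v = cnj \<beta>" unfolding \<beta>_def by (rule bf_herm[OF H u v])
  have zz: "z = u - t \<cdot>\<^sub>v v" by (rule z_def)
  have e1: "bf X z z = bf X u z - t * bf X v z"
  proof -
    have "bf X z z = bf X (u - t \<cdot>\<^sub>v v) z" using zz by metis
    also have "\<dots> = bf X u z - t * bf X v z"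
      by (simp only: bf_minus_left[OF X u tv z] bf_smult_left[OF X v z])
    finally show ?thesis .
  qed
  have e2: "bf X u z = bf X u u - cnj t * bf X u v"
  proof -
    have "bf X u z = bf X u (u - t \<cdot>\<^sub>v v)" using zz by metis
    also have "\<dots> = bf X u u - cnj t * bf X u v"
      by (simp only: bf_minus_right[OF H u tv u] bf_smult_right[OF H v u])
    finally show ?thesis .
  qed
  have e3: "bf X v z = bf X v u - cnj t * bf X v v"
  proof -
    have "bf X v z = bf X v (u - t \<cdot>\<^sub>v v)" using zz by metis
    also have "\<dots> = bf X v u - cnj t * bf X v v"
      by (simp only: bf_minus_right[OF H u tv v] bf_smult_right[OF H v v])
    finally show ?thesis .
  qed
  have e: "bf X z z = bf X u u - cnj t * cnj \<beta> - t * \<beta> + t * cnj t * of_real q"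
    unfolding e1 e2 e3 uv vv \<beta>_def by (simp add: algebra_simps)
  have q0: "q > 0" using qv q_def by simp
  have nb: "cnj \<beta> * \<beta> = of_real ((cmod \<beta>)\<^sup>2)"
    by (metis complex_norm_square mult.commute of_real_power)
  have a: "t * \<beta> = of_real ((cmod \<beta>)\<^sup>2 / q)"
  proof -
    have "t * \<beta> = (cnj \<beta> * \<beta>) / of_real q" unfolding t_def by simp
    also have "\<dots> = of_real ((cmod \<beta>)\<^sup>2 / q)" unfolding nb by simp
    finally show ?thesis .
  qed
  have b: "cnj t * cnj \<beta> = of_real ((cmod \<beta>)\<^sup>2 / q)"
    using arg_cong[OF a, of cnj] by simp
  have c: "t * cnj t * of_real q = of_real ((cmod \<beta>)\<^sup>2 / q)"
  proof -
    have "t * cnj t * of_real q = (cnj \<beta> * \<beta>) / of_real q" unfolding t_def using q0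
      by (simp add: field_simps power2_eq_square)
    also have "\<dots> = of_real ((cmod \<beta>)\<^sup>2 / q)" unfolding nb by simp
    finally show ?thesis .
  qed
  have "0 \<le> Re (bf X z z)" by (rule psd[OF z])
  also have "Re (bf X z z) = Re (bf X u u) - (cmod \<beta>)\<^sup>2 / q"
    unfolding e a b c by simp
  finally have "(cmod \<beta>)\<^sup>2 / q \<le> Re (bf X u u)" by simp
  hence "(cmod \<beta>)\<^sup>2 \<le> Re (bf X u u) * q" using q0 by (simp add: field_simps)
  thus ?thesis unfolding \<beta>_def q_def .
qed


lemma bf_add_mat: assumes "A \<in> carrier_mat n n" "B \<in> carrier_mat n n" "x \<in> carrier_vec n" "y \<in> carrier_vec n"
  shows "bf (A + B) x y = bf A x y + bf B x y"
  unfolding bf_def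
  by (subst add_mult_distrib_mat_vec[OF assms(1,2,3)], rule add_scalar_prod_distrib[of _ n], insert assms, auto)

lemma bf_minus_mat: assumes "A \<in> carrier_mat n n" "B \<in> carrier_mat n n" "x \<in> carrier_vec n" "y \<in> carrier_vec n"
  shows "bf (A - B) x y = bf A x y - bf B x y"
  unfolding bf_def
  by (subst minus_mult_distrib_mat_vec[OF assms(1,2,3)], rule minus_scalar_prod_distrib[of _ n], insert assms, auto)

lemma herm_add: assumes "hermitian_mat n A" "hermitian_mat n B" shows "hermitian_mat n (A + B)"
proof -
  have A: "A \<in> carrier_mat n n" and a: "\<forall>i<n. \<forall>j<n. A $$ (i,j) = cnj (A $$ (j,i))"
    using assms(1) unfolding herm_iff by blast+
  have B: "B \<in> carrier_mat n n" and b: "\<forall>i<n. \<forall>j<n. B $$ (i,j) = cnj (B $$ (j,i))"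
    using assms(2) unfolding herm_iff by blast+
  have "(A + B) $$ (i,j) = cnj ((A + B) $$ (j,i))" if "i < n" "j < n" for i j
  proof -
    have "(A + B) $$ (i,j) = A $$ (i,j) + B $$ (i,j)" using A B that by simp
    also have "\<dots> = cnj (A $$ (j,i)) + cnj (B $$ (j,i))" using a b that by metis
    also have "\<dots> = cnj ((A + B) $$ (j,i))" using A B that by simp
    finally show ?thesis .
  qed
  thus ?thesis unfolding herm_iff using A B by auto
qed

lemma herm_minus: assumes "hermitian_mat n A" "hermitian_mat n B" shows "hermitian_mat n (A - B)"
proof -
  have A: "A \<in> carrier_mat n n" and a: "\<forall>i<n. \<forall>j<n. A $$ (i,j) = cnj (A $$ (j,i))"
    using assms(1) unfolding herm_iff by blast+
  have B: "B \<in> carrier_mat n n" and b: "\<forall>i<n. \<forall>j<n. B $$ (i,j) = cnj (B $$ (j,i))"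
    using assms(2) unfolding herm_iff by blast+
  have "(A - B) $$ (i,j) = cnj ((A - B) $$ (j,i))" if "i < n" "j < n" for i j
  proof -
    have "(A - B) $$ (i,j) = A $$ (i,j) - B $$ (i,j)" using A B that by simp
    also have "\<dots> = cnj (A $$ (j,i)) - cnj (B $$ (j,i))" using a b that by metis
    also have "\<dots> = cnj ((A - B) $$ (j,i))" using A B that by simp
    finally show ?thesis .
  qed
  thus ?thesis unfolding herm_iff using A B by auto
qed

lemma herm_outer: assumes "w \<in> carrier_vec n" shows "hermitian_mat n (outer w)"
  unfolding herm_iff using assms outer_carrier[OF assms] unfolding outer_def by (auto simp: mult.commute)

lemma bf_outer_sq: assumes "w \<in> carrier_vec n" "x \<in> carrier_vec n"
  shows "Re (bf (outer w) x x) = (cmod (w \<bullet>c x))\<^sup>2"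
proof -
  have "bf (outer w) x x = cnj (w \<bullet>c x) * (w \<bullet>c x)"
    using bf_outer[OF assms(1,2,2)] cs_swap[OF assms(2,1)] by simp
  also have "\<dots> = of_real ((cmod (w \<bullet>c x))\<^sup>2)"
    by (metis complex_norm_square mult.commute of_real_power)
  finally show ?thesis by simp
qed

lemma trace_add: assumes "A \<in> carrier_mat n n" "B \<in> carrier_mat n n"
  shows "trace_mat (A + B) = trace_mat A + trace_mat B"
proof -
  have "trace_mat (A + B) = (\<Sum>i<n. A $$ (i,i) + B $$ (i,i))"
    unfolding trace_mat_def using assms by (intro sum.cong) auto
  also have "\<dots> = trace_mat A + trace_mat B" unfolding trace_mat_def sum.distrib using assms by simp
  finally show ?thesis .
qed

lemma trace_minus: assumes "A \<in> carrier_mat n n" "B \<in> carrier_mat n n"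
  shows "trace_mat (A - B) = trace_mat A - trace_mat B"
proof -
  have "trace_mat (A - B) = (\<Sum>i<n. A $$ (i,i) - B $$ (i,i))"
    unfolding trace_mat_def using assms by (intro sum.cong) auto
  also have "\<dots> = trace_mat A - trace_mat B" unfolding trace_mat_def sum_subtractf using assms by simp
  finally show ?thesis .
qed

lemma psd_bf: "psd_mat n A \<longleftrightarrow> hermitian_mat n A \<and> (\<forall>x\<in>carrier_vec n. 0 \<le> Re (bf A x x))"
  unfolding psd_mat_def bf_def by simp

lemma key:
  assumes h: "h \<in> carrier_vec M" and w: "w \<in> carrier_vec M" and R: "psd_mat M R"
    and s2: "sigma2 > 0" and sinr: "sinr2 h w sigma2 \<ge> Gam" and Gp: "Gam > 0"
  shows "\<exists>w' R'. w' \<in> carrier_vec M \<and> psd_mat M R' \<and> sinr1 h w' R' sigma2 \<ge> Gam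
     \<and> sqnorm w' + Re (trace_mat R') = sqnorm w + Re (trace_mat R) \<and> outer w' + R' = outer w + R"
proof -
  have HR: "hermitian_mat M R" and pR: "\<And>x. x \<in> carrier_vec M \<Longrightarrow> 0 \<le> Re (bf R x x)"
    using R unfolding psd_bf by auto
  have Rc: "R \<in> carrier_mat M M" using HR unfolding hermitian_mat_def by auto
  have Oc: "outer w \<in> carrier_mat M M" by (rule outer_carrier[OF w])
  define X where "X = outer w + R"
  have Xc: "X \<in> carrier_mat M M" unfolding X_def using Oc Rc by auto
  have HX: "hermitian_mat M X" unfolding X_def by (rule herm_add[OF herm_outer[OF w] HR])
  have qX: "Re (bf X x x) = (cmod (w \<bullet>c x))\<^sup>2 + Re (bf R x x)" if x: "x \<in> carrier_vec M" for x
    unfolding X_def using bf_add_mat[OF Oc Rc x x] bf_outer_sq[OF w x] by simp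
  have pX: "0 \<le> Re (bf X x x)" if x: "x \<in> carrier_vec M" for x
    using qX[OF x] pR[OF x] by simp
  define qh where "qh = Re (bf X h h)"
  have g1: "(cmod (w \<bullet>c h))\<^sup>2 / sigma2 \<ge> Gam" using sinr unfolding sinr2_def .
  hence g2: "(cmod (w \<bullet>c h))\<^sup>2 \<ge> Gam * sigma2" using s2 by (simp add: field_simps)
  have qge: "qh \<ge> (cmod (w \<bullet>c h))\<^sup>2" unfolding qh_def using qX[OF h] pR[OF h] by simp
  have qpos: "qh > 0" using qge g2 Gp s2 by (smt (verit) mult_pos_pos)
  define c where "c = 1 / sqrt qh"
  have c2: "c\<^sup>2 * qh = 1" unfolding c_def using qpos by (simp add: power_divide)
  have cpos: "c > 0" unfolding c_def using qpos by simp
  define w' where "w' = complex_of_real c \<cdot>\<^sub>v (X *\<^sub>v h)"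
  have w'c: "w' \<in> carrier_vec M" unfolding w'_def using Xc h by auto
  define R' where "R' = X - outer w'"
  have O'c: "outer w' \<in> carrier_mat M M" by (rule outer_carrier[OF w'c])
  have R'c: "R' \<in> carrier_mat M M" unfolding R'_def using Xc O'c by auto
  have wx: "w' \<bullet>c x = complex_of_real c * bf X h x" if x: "x \<in> carrier_vec M" for x
    unfolding w'_def bf_def by (rule smult_scalar_prod_distrib[of _ M], insert Xc h x, auto)
  have qR': "Re (bf R' x x) = Re (bf X x x) - c\<^sup>2 * (cmod (bf X h x))\<^sup>2" if x: "x \<in> carrier_vec M" for x
  proof -
    have "Re (bf R' x x) = Re (bf X x x) - Re (bf (outer w') x x)"
      unfolding R'_def using bf_minus_mat[OF Xc O'c x x] by simp
    also have "Re (bf (outer w') x x) = (cmod (w' \<bullet>c x))\<^sup>2" by (rule bf_outer_sq[OF w'c x])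
    also have "\<dots> = c\<^sup>2 * (cmod (bf X h x))\<^sup>2" unfolding wx[OF x] using cpos
      by (simp add: norm_mult power_mult_distrib)
    finally show ?thesis .
  qed
  have HR': "hermitian_mat M R'" unfolding R'_def by (rule herm_minus[OF HX herm_outer[OF w'c]])
  have pR': "0 \<le> Re (bf R' x x)" if x: "x \<in> carrier_vec M" for x
  proof -
    have "(cmod (bf X h x))\<^sup>2 \<le> Re (bf X x x) * qh"
      unfolding qh_def by (rule cs[OF HX pX x h], insert qpos qh_def, auto)
    hence "c\<^sup>2 * (cmod (bf X h x))\<^sup>2 \<le> c\<^sup>2 * (Re (bf X x x) * qh)"
      by (simp add: mult_left_mono)
    also have "\<dots> = Re (bf X x x)" using c2 by (simp add: algebra_simps)
    finally show ?thesis using qR'[OF x] by simp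
  qed
  have psdR': "psd_mat M R'" unfolding psd_bf using HR' pR' by auto
  have hh: "bf X h h = of_real qh" unfolding qh_def by (rule bf_real[OF HX h])
  have num: "(cmod (w' \<bullet>c h))\<^sup>2 = qh"
  proof -
    have "(cmod (w' \<bullet>c h))\<^sup>2 = c\<^sup>2 * qh\<^sup>2" unfolding wx[OF h] hh using cpos qpos
      by (simp add: norm_mult power_mult_distrib)
    also have "\<dots> = qh" using c2 by (simp add: power2_eq_square algebra_simps)
    finally show ?thesis .
  qed
  have den: "Re (bf R' h h) = 0"
    using qR'[OF h] num wx[OF h] cpos unfolding qh_def
    by (simp add: norm_mult power_mult_distrib)
  have s1: "sinr1 h w' R' sigma2 = qh / sigma2"
    unfolding sinr1_def using num den unfolding bf_def by simp
  have s1g: "sinr1 h w' R' sigma2 \<ge> Gam"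
    unfolding s1 using g1 qge s2 by (smt (verit) divide_right_mono)
  have sum: "outer w' + R' = outer w + R"
    unfolding R'_def X_def[symmetric] by (rule eq_matI, insert Xc O'c, auto)
  have pw: "sqnorm w' + Re (trace_mat R') = sqnorm w + Re (trace_mat R)"
  proof -
    have "sqnorm w' + Re (trace_mat R') = Re (trace_mat (outer w') + trace_mat R')"
      unfolding sqnorm_outer by simp
    also have "\<dots> = Re (trace_mat (outer w' + R'))" using trace_add[OF O'c R'c] by simp
    also have "\<dots> = Re (trace_mat (outer w + R))" unfolding sum ..
    also have "\<dots> = sqnorm w + Re (trace_mat R)" using trace_add[OF Oc Rc] unfolding sqnorm_outer by simp
    finally show ?thesis .
  qed
  show ?thesis using w'c psdR' s1g pw sum by blast
qed


lemma refl_carrier: "refl_mat N v \<in> carrier_mat N N"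
  unfolding refl_mat_def by auto

lemma chan_carrier: assumes "G \<in> carrier_mat N M" "hdir \<in> carrier_vec M" "hr \<in> carrier_vec N" "Phi \<in> carrier_mat N N"
  shows "chan G hdir hr Phi \<in> carrier_vec M"
proof -
  have "mat_adjoint G \<in> carrier_mat M N" by (rule adj_carrier[OF assms(1)])
  moreover have "mat_adjoint Phi \<in> carrier_mat N N" by (rule adj_carrier[OF assms(4)])
  ultimately show ?thesis unfolding chan_def using assms(2,3) by auto
qed

lemma feas12: assumes h: "chan G hdir hr Phi \<in> carrier_vec M" and s2: "sigma2 > 0"
  and p: "p \<in> feas1 M G hdir hr Gam sigma2 P0 Phi"
  shows "p \<in> feas2 M G hdir hr Gam sigma2 P0 Phi"
proof -
  obtain w R where pw: "p = (w, R)" by (cases p)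
  let ?h = "chan G hdir hr Phi"
  have f: "w \<in> carrier_vec M" "psd_mat M R" "sinr1 ?h w R sigma2 \<ge> Gam" "sqnorm w + Re (trace_mat R) \<le> P0"
    using p unfolding pw feas1_def by auto
  have d: "0 \<le> Re ((R *\<^sub>v ?h) \<bullet>c ?h)" using f(2) h unfolding psd_mat_def by auto
  have "sinr1 ?h w R sigma2 \<le> sinr2 ?h w sigma2"
    unfolding sinr1_def sinr2_def using d s2 by (intro divide_left_mono) auto
  thus ?thesis using f unfolding pw feas2_def by auto
qed

lemma feas21: assumes h: "chan G hdir hr Phi \<in> carrier_vec M" and s2: "sigma2 > 0" and Gp: "Gam > 0"
  and p: "p \<in> feas2 M G hdir hr Gam sigma2 P0 Phi"
  shows "\<exists>p'\<in>feas1 M G hdir hr Gam sigma2 P0 Phi. outer (fst p') + snd p' = outer (fst p) + snd p"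
proof -
  obtain w R where pw: "p = (w, R)" by (cases p)
  let ?h = "chan G hdir hr Phi"
  have f: "w \<in> carrier_vec M" "psd_mat M R" "sinr2 ?h w sigma2 \<ge> Gam" "sqnorm w + Re (trace_mat R) \<le> P0"
    using p unfolding pw feas2_def by auto
  obtain w' R' where k: "w' \<in> carrier_vec M" "psd_mat M R'" "sinr1 ?h w' R' sigma2 \<ge> Gam"
     "sqnorm w' + Re (trace_mat R') = sqnorm w + Re (trace_mat R)" "outer w' + R' = outer w + R"
    using key[OF h f(1,2) s2 f(3) Gp] by blast
  have "(w', R') \<in> feas1 M G hdir hr Gam sigma2 P0 Phi" using k f(4) unfolding feas1_def by auto
  thus ?thesis using k(5) unfolding pw by (intro bexI[of _ "(w', R')"]) auto
qed


theorem proposition5: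
  fixes M N :: nat and G :: "complex mat" and hdir hr :: "complex vec"
    and Gam sigma2 P0 :: real
  assumes "M \<ge> 1" "N \<ge> 1"
    and "G \<in> carrier_mat N M" "hdir \<in> carrier_vec M" "hr \<in> carrier_vec N"
    and "Gam > 0" "sigma2 > 0" "P0 > 0"
  shows "(\<forall>v. unimod N v \<and> sdr_has_opt M G hdir hr Gam sigma2 P0 (refl_mat N v) \<longrightarrow>
            val_P11 M G hdir hr Gam sigma2 P0 (refl_mat N v) = val_P21 M G hdir hr Gam sigma2 P0 (refl_mat N v))
       \<and> ((\<forall>v. unimod N v \<longrightarrow> sdr_has_opt M G hdir hr Gam sigma2 P0 (refl_mat N v)) \<longrightarrow>
            val_P1 M N G hdir hr Gam sigma2 P0 = val_P2 M N G hdir hr Gam sigma2 P0)"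
proof -
  have hc: "chan G hdir hr (refl_mat N v) \<in> carrier_vec M" for v
    by (rule chan_carrier[OF assms(3,4,5) refl_carrier])
  have eq1: "val_P11 M G hdir hr Gam sigma2 P0 (refl_mat N v) = val_P21 M G hdir hr Gam sigma2 P0 (refl_mat N v)" for v
  proof (rule antisym)
    show "val_P11 M G hdir hr Gam sigma2 P0 (refl_mat N v) \<le> val_P21 M G hdir hr Gam sigma2 P0 (refl_mat N v)"
      unfolding val_P11_def val_P21_def
    proof (rule INF_mono)
      fix p assume "p \<in> feas2 M G hdir hr Gam sigma2 P0 (refl_mat N v)"
      from feas21[OF hc assms(7,6) this] show "\<exists>p'\<in>feas1 M G hdir hr Gam sigma2 P0 (refl_mat N v).
          crb G (outer (fst p') + snd p') \<le> crb G (outer (fst p) + snd p)" by (metis order_refl)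
    qed
    show "val_P21 M G hdir hr Gam sigma2 P0 (refl_mat N v) \<le> val_P11 M G hdir hr Gam sigma2 P0 (refl_mat N v)"
      unfolding val_P11_def val_P21_def
      by (rule INF_mono) (use feas12[OF hc assms(7)] in blast)
  qed
  have eq2: "val_P1 M N G hdir hr Gam sigma2 P0 = val_P2 M N G hdir hr Gam sigma2 P0"
  proof (rule antisym)
    show "val_P1 M N G hdir hr Gam sigma2 P0 \<le> val_P2 M N G hdir hr Gam sigma2 P0"
      unfolding val_P1_def val_P2_def
    proof (rule INF_mono)
      fix p assume p: "p \<in> {(v, w, R). unimod N v \<and> (w, R) \<in> feas2 M G hdir hr Gam sigma2 P0 (refl_mat N v)}"
      obtain v w R where pv: "p = (v, w, R)" by (cases p) auto
      have u: "unimod N v" and f: "(w, R) \<in> feas2 M G hdir hr Gam sigma2 P0 (refl_mat N v)" using p pv by auto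
      obtain p' where p': "p' \<in> feas1 M G hdir hr Gam sigma2 P0 (refl_mat N v)"
        "outer (fst p') + snd p' = outer (fst (w, R)) + snd (w, R)"
        using feas21[OF hc assms(7,6) f] by blast
      have "(v, fst p', snd p') \<in> {(v, w, R). unimod N v \<and> (w, R) \<in> feas1 M G hdir hr Gam sigma2 P0 (refl_mat N v)}"
        using u p'(1) by auto
      moreover have "crb G (outer (fst (snd (v, fst p', snd p'))) + snd (snd (v, fst p', snd p'))) \<le>
          crb G (outer (fst (snd p)) + snd (snd p))" using p'(2) pv by simp
      ultimately show "\<exists>m\<in>{(v, w, R). unimod N v \<and> (w, R) \<in> feas1 M G hdir hr Gam sigma2 P0 (refl_mat N v)}.
          crb G (outer (fst (snd m)) + snd (snd m)) \<le> crb G (outer (fst (snd p)) + snd (snd p))" by blast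
    qed
    show "val_P2 M N G hdir hr Gam sigma2 P0 \<le> val_P1 M N G hdir hr Gam sigma2 P0"
      unfolding val_P1_def val_P2_def
      by (rule INF_mono) (use feas12[OF hc assms(7)] in force)
  qed
  show ?thesis using eq1 eq2 by blast
qed

end
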